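(* Let $m\ge1$. For any $x=(x_0,\dots,x_m)\in\mathbb{R}^{m+1}$, $$\sum_{i=0}^{2m}(x*x)_i=\Big(\sum_{i=0}^{m}x_i\Big)^2.$$ Moreover, if $y\in\mathbb{R}^{2m+1}_+$ and $x^\star\in\mathbb{R}^{m+1}_+$ is a minimizer of $x\mapsto\mathcal{I}(y\|x*x)$ over $\mathbb{R}^{m+1}_+$, then $$\sum_{i=0}^{2m}(x^\star*x^\star)_i=\Big(\sum_{i=0}^{m}x^\star_i\Big)^2=\sum_{i=0}^{2m}y_i.$$
   Context: For $x\in\mathbb{R}^{m+1}$ set $x_k=0$ for $k<0$ and $k>m$, and $(x*x)_i=\sum_{j=0}^{i}x_{i-j}x_j$ for $i=0,\dots,2m$. For nonnegative vectors $u,v$ of equal length, $\mathcal{I}(u\|v)=\sum_i\big(u_i\log\frac{u_i}{v_i}-u_i+v_i\big)$ if $u_i=0$ whenever $v_i=0$ (convention $0\log0=0$), and $+\infty$ otherwise. *)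

theory Defs
  imports Complex_Main "HOL-Library.Extended_Real"
begin

text \<open>Vectors in R^(m+1) are represented as functions nat => real; only the
  entries 0..m are used. Entries outside 0..m are treated as 0 (zero padding).\<close>

definition pad :: "nat \<Rightarrow> (nat \<Rightarrow> real) \<Rightarrow> nat \<Rightarrow> real" where
  "pad m x k = (if k \<le> m then x k else 0)"

definition conv :: "nat \<Rightarrow> (nat \<Rightarrow> real) \<Rightarrow> nat \<Rightarrow> real" where
  "conv m x i = (\<Sum>j=0..i. pad m x (i - j) * pad m x j)"

definition idiv :: "nat \<Rightarrow> (nat \<Rightarrow> real) \<Rightarrow> (nat \<Rightarrow> real) \<Rightarrow> ereal" where
  "idiv n u v =
     (if (\<forall>i<n. v i = 0 \<longrightarrow> u i = 0)
      then ereal (\<Sum>i<n. (if u i = 0 then 0 else u i * ln (u i / v i)) - u i + v i)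
      else \<infinity>)"

definition nonneg_vec :: "nat \<Rightarrow> (nat \<Rightarrow> real) \<Rightarrow> bool" where
  "nonneg_vec n u \<longleftrightarrow> (\<forall>i<n. 0 \<le> u i)"

end

theory Submission
  imports Defs
begin

lemma conv_sum:
  fixes x :: "nat \<Rightarrow> real"
  shows "(\<Sum>i=0..2*m. conv m x i) = (\<Sum>i=0..m. x i)^2"
proof -
  have "(\<Sum>i=0..2*m. conv m x i) = (\<Sum>k\<le>2*m. \<Sum>i\<le>k. pad m x i * pad m x (k - i))"
    unfolding conv_def atLeast0AtMost
    by (intro sum.cong refl) (simp add: mult.commute)
  also have "\<dots> = (\<Sum>(i,j)\<in>{(i,j). i+j \<le> 2*m}. pad m x i * pad m x j)"
    by (rule sum.triangle_reindex_eq[symmetric])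
  also have "\<dots> = (\<Sum>(i,j)\<in>{..m}\<times>{..m}. pad m x i * pad m x j)"
  proof (rule sum.mono_neutral_right)
    have "{(i,j). i+j \<le> 2*m} \<subseteq> {..2*m}\<times>{..2*m}" by auto
    then show "finite {(i::nat,j). i+j \<le> 2*m}" using finite_subset by blast
    show "{..m}\<times>{..m} \<subseteq> {(i,j). i+j \<le> 2*m}" by auto
    show "\<forall>p\<in>{(i,j). i+j \<le> 2*m} - {..m}\<times>{..m}. (case p of (i,j) \<Rightarrow> pad m x i * pad m x j) = 0"
      by (auto simp: pad_def split: if_splits)
  qed
  also have "\<dots> = (\<Sum>i\<le>m. \<Sum>j\<le>m. x i * x j)"
    by (simp add: sum.cartesian_product[symmetric] pad_def)
  also have "\<dots> = (\<Sum>i=0..m. x i)^2"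
    by (simp add: power2_eq_square sum_product atLeast0AtMost)
  finally show ?thesis .
qed

lemma conv_scale:
  "conv m (\<lambda>k. t * x k) i = t^2 * conv m x i"
proof -
  have "pad m (\<lambda>k. t * x k) k = t * pad m x k" for k by (simp add: pad_def)
  then show ?thesis unfolding conv_def
    by (simp add: sum_distrib_left power2_eq_square algebra_simps)
qed

lemma conv_nonneg:
  assumes "nonneg_vec (m+1) x"
  shows "0 \<le> conv m x i"
  using assms unfolding conv_def pad_def nonneg_vec_def
  by (intro sum_nonneg) auto

lemma conv_one_pos:
  assumes "i \<le> 2*m"
  shows "0 < conv m (\<lambda>_. 1) i"
proof -
  have "pad m (\<lambda>_. 1) (i - min i m) * pad m (\<lambda>_. 1) (min i m) \<le> conv m (\<lambda>_. 1) i"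
    unfolding conv_def
    by (rule member_le_sum) (auto simp: pad_def)
  moreover have "pad m (\<lambda>_. 1) (i - min i m) * pad m (\<lambda>_. 1) (min i m) = 1"
    using assms by (auto simp: pad_def)
  ultimately show ?thesis by linarith
qed


lemma idiv_scale:
  assumes y: "\<forall>i<n. 0 \<le> y i" and v: "\<forall>i<n. 0 \<le> v i"
    and c: "\<forall>i<n. v i = 0 \<longrightarrow> y i = 0" and s: "s > 0"
  shows "idiv n y v = ereal (\<Sum>i<n. (if y i = 0 then 0 else y i * ln (y i / v i)) - y i + v i)"
    and "idiv n y (\<lambda>i. s * v i) = ereal ((\<Sum>i<n. (if y i = 0 then 0 else y i * ln (y i / v i)) - y i + v i)
           + (s - 1) * (\<Sum>i<n. v i) - (\<Sum>i<n. y i) * ln s)"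
proof -
  show "idiv n y v = ereal (\<Sum>i<n. (if y i = 0 then 0 else y i * ln (y i / v i)) - y i + v i)"
    using c unfolding idiv_def by simp
  have c2: "\<forall>i<n. s * v i = 0 \<longrightarrow> y i = 0" using c s by simp
  have t: "(if y i = 0 then 0 else y i * ln (y i / (s * v i))) - y i + s * v i
        = ((if y i = 0 then 0 else y i * ln (y i / v i)) - y i + v i) + (s - 1) * v i - y i * ln s"
    if "i < n" for i
  proof (cases "y i = 0")
    case True then show ?thesis by (simp add: algebra_simps)
  next
    case False
    then have "y i > 0" "v i > 0" using y v c that by (auto simp: order_le_less)
    then have "ln (y i / (s * v i)) = ln (y i / v i) - ln s"
      using s by (simp add: ln_div ln_mult)
    then have "y i * ln (y i / (s * v i)) = y i * ln (y i / v i) - y i * ln s"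
      by (simp add: right_diff_distrib)
    then show ?thesis using False by (simp add: algebra_simps)
  qed
  have "idiv n y (\<lambda>i. s * v i) = ereal (\<Sum>i<n. (if y i = 0 then 0 else y i * ln (y i / (s * v i))) - y i + s * v i)"
    using c2 unfolding idiv_def by simp
  also have "\<dots> = ereal (\<Sum>i<n. ((if y i = 0 then 0 else y i * ln (y i / v i)) - y i + v i) + (s - 1) * v i - y i * ln s)"
    using t by (intro arg_cong[where f=ereal] sum.cong) auto
  also have "\<dots> = ereal ((\<Sum>i<n. (if y i = 0 then 0 else y i * ln (y i / v i)) - y i + v i)
           + (s - 1) * (\<Sum>i<n. v i) - (\<Sum>i<n. y i) * ln s)"
    by (simp add: sum.distrib sum_subtractf sum_distrib_left sum_distrib_right)
  finally show "idiv n y (\<lambda>i. s * v i) = ereal ((\<Sum>i<n. (if y i = 0 then 0 else y i * ln (y i / v i)) - y i + v i)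
           + (s - 1) * (\<Sum>i<n. v i) - (\<Sum>i<n. y i) * ln s)" .
qed

lemma ln_lower: "s > 0 \<Longrightarrow> ln (s::real) \<ge> 1 - 1 / s"
proof -
  assume s: "s > 0"
  have "ln (1/s) \<le> 1/s - 1" using s by (intro ln_le_minus_one) simp
  then show ?thesis using s by (simp add: ln_div)
qed

lemma g_zero:
  fixes C Y :: real
  assumes C: "C \<ge> 0" and Y: "Y \<ge> 0" and g: "\<And>s. s > 0 \<Longrightarrow> 0 \<le> (s - 1) * C - Y * ln s"
  shows "C = Y"
proof (rule ccontr)
  assume ne: "C \<noteq> Y"
  have key: "(s - 1) * C - Y * ln s \<le> (s - 1) * (C - Y / s)" if "s > 0" for s
  proof -
    have "Y * (1 - 1/s) \<le> Y * ln s" using ln_lower[OF that] Y by (intro mult_left_mono)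
    moreover have "(s - 1) * (C - Y / s) = (s - 1) * C - Y * (1 - 1/s)"
      using that by (simp add: field_simps)
    ultimately show ?thesis by linarith
  qed
  show False
  proof (cases "C < Y")
    case True
    define s where "s = (if C = 0 then 2 else (Y + C) / (2 * C))"
    have s1: "s > 1" using True C by (auto simp: s_def field_simps)
    have "C * s < Y" using True C by (auto simp: s_def field_simps)
    then have "C - Y / s < 0" using s1 by (simp add: field_simps)
    then have "(s - 1) * (C - Y / s) < 0" using s1 by (simp add: mult_pos_neg)
    then show False using g[of s] key[of s] s1 by linarith
  next
    case False
    then have CY: "C > Y" using ne by linarith
    define s where "s = (Y / C + 1) / 2"
    have s0: "s > 0" using CY Y by (simp add: s_def add_nonneg_pos)
    have s1: "s < 1" using CY Y by (simp add: s_def field_simps)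
    have "C * s > Y" using CY Y by (simp add: s_def field_simps)
    then have "C - Y / s > 0" using s0 by (simp add: field_simps)
    then have "(s - 1) * (C - Y / s) < 0" using s1 by (simp add: mult_neg_pos)
    then show False using g[of s] key[of s] s0 by linarith
  qed
qed


theorem proposition2:
  fixes m :: nat
  assumes "m \<ge> 1"
  shows "(\<forall>x :: nat \<Rightarrow> real.
            (\<Sum>i=0..2*m. conv m x i) = (\<Sum>i=0..m. x i)^2)
       \<and> (\<forall>(y :: nat \<Rightarrow> real) (xs :: nat \<Rightarrow> real).
            nonneg_vec (2*m+1) y \<and> nonneg_vec (m+1) xs \<and>
            (\<forall>x. nonneg_vec (m+1) x \<longrightarrow>
                 idiv (2*m+1) y (conv m xs) \<le> idiv (2*m+1) y (conv m x))
            \<longrightarrow> (\<Sum>i=0..2*m. conv m xs i) = (\<Sum>i=0..m. xs i)^2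
              \<and> (\<Sum>i=0..m. xs i)^2 = (\<Sum>i=0..2*m. y i))"
proof (intro conjI allI impI)
  fix x :: "nat \<Rightarrow> real"
  show "(\<Sum>i=0..2*m. conv m x i) = (\<Sum>i=0..m. x i)^2" by (rule conv_sum)
next
  fix y xs :: "nat \<Rightarrow> real"
  assume H: "nonneg_vec (2*m+1) y \<and> nonneg_vec (m+1) xs \<and>
            (\<forall>x. nonneg_vec (m+1) x \<longrightarrow>
                 idiv (2*m+1) y (conv m xs) \<le> idiv (2*m+1) y (conv m x))"
  then have y: "\<forall>i<2*m+1. 0 \<le> y i" and xs: "nonneg_vec (m+1) xs"
    and mn: "\<And>x. nonneg_vec (m+1) x \<Longrightarrow> idiv (2*m+1) y (conv m xs) \<le> idiv (2*m+1) y (conv m x)"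
    unfolding nonneg_vec_def by auto
  show CS: "(\<Sum>i=0..2*m. conv m xs i) = (\<Sum>i=0..m. xs i)^2" by (rule conv_sum)
  let ?n = "2*m+1"
  let ?c = "conv m xs"
  have cnn: "\<forall>i<?n. 0 \<le> ?c i" using conv_nonneg[OF xs] by auto
  have one: "nonneg_vec (m+1) (\<lambda>_. 1)" by (simp add: nonneg_vec_def)
  have "idiv ?n y (conv m (\<lambda>_. 1)) \<noteq> \<infinity>"
  proof -
    have "\<forall>i<?n. conv m (\<lambda>_. 1) i = 0 \<longrightarrow> y i = 0"
      using conv_one_pos[of _ m] by (metis less_Suc_eq_le add.commute plus_1_eq_Suc less_irrefl)
    then show ?thesis unfolding idiv_def by simp
  qed
  then have "idiv ?n y ?c \<noteq> \<infinity>" using mn[OF one] by (metis ereal_infty_less_eq(1))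
  then have cond: "\<forall>i<?n. ?c i = 0 \<longrightarrow> y i = 0" unfolding idiv_def by (metis (full_types))
  define R where "R = (\<Sum>i<?n. (if y i = 0 then 0 else y i * ln (y i / ?c i)) - y i + ?c i)"
  define C where "C = (\<Sum>i<?n. ?c i)"
  define Y where "Y = (\<Sum>i<?n. y i)"
  have g: "0 \<le> (s - 1) * C - Y * ln s" if s: "s > 0" for s
  proof -
    have nn: "nonneg_vec (m+1) (\<lambda>k. sqrt s * xs k)"
      using xs s unfolding nonneg_vec_def by auto
    have "conv m (\<lambda>k. sqrt s * xs k) = (\<lambda>i. s * ?c i)"
      using s by (simp add: fun_eq_iff conv_scale)
    then have "idiv ?n y ?c \<le> idiv ?n y (\<lambda>i. s * ?c i)" using mn[OF nn] by simp
    then have "ereal R \<le> ereal (R + (s - 1) * C - Y * ln s)"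
      using idiv_scale[OF y cnn cond s] unfolding R_def C_def Y_def by simp
    then show ?thesis by simp
  qed
  have C0: "C \<ge> 0" unfolding C_def using cnn by (intro sum_nonneg) auto
  have Y0: "Y \<ge> 0" unfolding Y_def using y by (intro sum_nonneg) auto
  have "C = Y" by (rule g_zero[OF C0 Y0 g])
  moreover have e: "{..<?n} = {0..2*m}" by auto
  ultimately have "(\<Sum>i=0..2*m. ?c i) = (\<Sum>i=0..2*m. y i)" unfolding C_def Y_def e by simp
  then show "(\<Sum>i=0..m. xs i)^2 = (\<Sum>i=0..2*m. y i)" using CS by simp
qed

end
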